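(* Let $n\ge2$ and let $v_1,\dots,v_k$ and $u_1,\dots,u_k$ be two collections of $k\le n-1$ normalized vectors in $\mathbb C^n$ such that $\dim\mathrm{span}\{v_1,\dots,v_k\}\ge2$ and $\dim\mathrm{span}\{u_1,\dots,u_k\}\ge2$. Let $\mathcal V:=\{X\in M_n(\mathbb C):\ v_1^\ast Xu_1=\dots=v_k^\ast Xu_k=0\}$. Then $\mathcal V$ contains no rank-one matrix that is left-symmetric relative to $\mathcal V$.
   Context: $M_n(\mathbb C)$ carries the operator (spectral) norm. $A\perp B$ (Birkhoff–James orthogonality) means $\|A+\lambda B\|\ge\|A\|$ for all $\lambda\in\mathbb C$. For a subset $\mathcal S$, an element $A\in\mathcal S$ is left-symmetric relative to $\mathcal S$ if for every $B\in\mathcal S$, $A\perp B$ implies $B\perp A$. *)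

theory Defs
  imports "HOL-Analysis.Analysis"
begin

text \<open>Matrices in M_n(C) are represented as complex^'n^'n, vectors in C^n as complex^'n.
  The operator (spectral) norm is the operator norm induced by the Euclidean norm on C^n.\<close>

definition opnorm :: "complex^'n^'n \<Rightarrow> real" where
  "opnorm A = onorm (\<lambda>x. A *v x)"

definition cmat_scale :: "complex \<Rightarrow> complex^'n^'n \<Rightarrow> complex^'n^'n" where
  "cmat_scale c B = (\<chi> i j. c * B $ i $ j)"

definition bj_orth :: "complex^'n^'n \<Rightarrow> complex^'n^'n \<Rightarrow> bool" where
  "bj_orth A B \<longleftrightarrow> (\<forall>c::complex. opnorm (A + cmat_scale c B) \<ge> opnorm A)"

definition left_symmetric_in :: "complex^'n^'n \<Rightarrow> (complex^'n^'n) set \<Rightarrow> bool" where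
  "left_symmetric_in A S \<longleftrightarrow> A \<in> S \<and> (\<forall>B\<in>S. bj_orth A B \<longrightarrow> bj_orth B A)"

definition sesq :: "complex^'n \<Rightarrow> complex^'n^'n \<Rightarrow> complex^'n \<Rightarrow> complex" where
  "sesq v X u = (\<Sum>i\<in>UNIV. cnj (v $ i) * (X *v u) $ i)"

end

theory Submission
  imports Defs
begin

definition cinner :: "complex^'n \<Rightarrow> complex^'n \<Rightarrow> complex" where
  "cinner a b = (\<Sum>i\<in>UNIV. cnj (a$i) * b$i)"

definition outer :: "complex^'n \<Rightarrow> complex^'n \<Rightarrow> complex^'n^'n" where
  "outer p q = (\<chi> i j. p$i * cnj (q$j))"

lemma outer_mult: "outer p q *v z = cinner q z *s p"
  by (simp add: outer_def cinner_def matrix_vector_mult_def vec_eq_iff sum_distrib_left algebra_simps)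

lemma cmat_scale_mult: "cmat_scale c B *v z = c *s (B *v z)"
  by (simp add: cmat_scale_def matrix_vector_mult_def vec_eq_iff sum_distrib_left algebra_simps)

lemma sesq_cinner: "sesq v X u = cinner v (X *v u)"
  by (simp add: sesq_def cinner_def)

lemma cinner_add_right: "cinner a (b + c) = cinner a b + cinner a c"
  by (simp add: cinner_def distrib_left sum.distrib)
lemma cinner_add_left: "cinner (a + b) c = cinner a c + cinner b c"
  by (simp add: cinner_def distrib_right sum.distrib)
lemma cinner_diff_right: "cinner a (b - c) = cinner a b - cinner a c"
  by (simp add: cinner_def right_diff_distrib sum_subtractf)
lemma cinner_diff_left: "cinner (a - b) c = cinner a c - cinner b c"
  by (simp add: cinner_def left_diff_distrib sum_subtractf)
lemma cinner_scale_right: "cinner a (c *s b) = c * cinner a b"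
  by (simp add: cinner_def sum_distrib_left algebra_simps)
lemma cinner_scale_left: "cinner (c *s a) b = cnj c * cinner a b"
  by (simp add: cinner_def sum_distrib_left algebra_simps)
lemma cinner_commute: "cinner b a = cnj (cinner a b)"
  by (simp add: cinner_def mult.commute)
lemma cinner_zero_left[simp]: "cinner 0 a = 0" by (simp add: cinner_def)
lemma cinner_zero_right[simp]: "cinner a 0 = 0" by (simp add: cinner_def)

lemmas cinner_simps = cinner_add_right cinner_add_left cinner_diff_right cinner_diff_left
  cinner_scale_right cinner_scale_left

lemma inner_eq_Re_cinner: "inner a b = Re (cinner a b)"
  by (simp add: inner_vec_def cinner_def inner_complex_def Re_sum)

lemma inner_ii_eq_Im_cinner: "inner (\<i> *s a) b = Im (cinner a b)"
  by (simp add: inner_vec_def cinner_def inner_complex_def Im_sum)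

lemma cinner_self: "cinner z z = of_real ((norm z)^2)"
proof -
  have "Im (cinner z z) = 0" by (simp add: cinner_def Im_sum algebra_simps)
  moreover have "Re (cinner z z) = (norm z)^2"
    by (simp add: power2_norm_eq_inner inner_eq_Re_cinner)
  ultimately show ?thesis by (simp add: complex_eq_iff)
qed

lemma norm_sq_cinner: "(norm z)^2 = Re (cinner z z)"
  by (simp add: cinner_self)


lemma cnj_mult_self: "cnj a * a = of_real ((cmod a)^2)"
  using cmod_power2[of a] by (simp add: complex_eq_iff power2_eq_square)

lemma ofreal_scale: "complex_of_real r *s z = r *\<^sub>R (z::complex^'n)"
  by (simp add: vec_eq_iff) (simp add: scaleR_conv_of_real)

lemma pyth2:
  fixes x g :: "complex^'n"
  assumes "norm x = 1" "norm g = 1" "cinner x g = 0"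
  shows "(norm (a *s x + b *s g))^2 = (cmod a)^2 + (cmod b)^2"
proof -
  have gx: "cinner g x = 0" using assms(3) by (simp add: cinner_commute[of g x])
  have "cinner x x = 1" "cinner g g = 1" using assms(1,2) by (simp_all add: cinner_self)
  then have "complex_of_real ((norm (a *s x + b *s g))^2) = cnj a * a + cnj b * b"
    using assms(3) gx by (simp add: cinner_self[symmetric] cinner_simps del: of_real_power)
  then have "complex_of_real ((norm (a *s x + b *s g))^2) = complex_of_real ((cmod a)^2 + (cmod b)^2)"
    by (simp add: cnj_mult_self del: of_real_power)
  then show ?thesis using of_real_eq_iff by blast
qed

lemma bessel2:
  fixes y h z :: "complex^'n"
  assumes "norm y = 1" "norm h = 1" "cinner y h = 0"
  shows "(cmod (cinner y z))^2 + (cmod (cinner h z))^2 \<le> (norm z)^2"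
proof -
  define p where "p = cinner y z"
  define q where "q = cinner h z"
  define w where "w = z - p *s y - q *s h"
  have hy: "cinner h y = 0" using assms(3) by (simp add: cinner_commute[of h y])
  have yy: "cinner y y = 1" "cinner h h = 1" using assms(1,2) by (simp_all add: cinner_self)
  have wy: "cinner y w = 0" "cinner h w = 0"
    using yy hy assms(3) by (simp_all add: w_def cinner_simps p_def q_def)
  have wy': "cinner w y = 0" "cinner w h = 0"
    using wy by (simp_all add: cinner_commute[of w])
  have z: "z = w + (p *s y + q *s h)" by (simp add: w_def)
  have "cinner z z = cinner w w + (cinner (p *s y + q *s h) (p *s y + q *s h))"
    apply (subst (1 2) z)
    using wy wy' by (simp add: cinner_simps)
  also have "cinner (p *s y + q *s h) (p *s y + q *s h) = of_real ((cmod p)^2 + (cmod q)^2)"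
    using yy hy assms(3) by (simp add: cinner_simps cnj_mult_self[unfolded mult.commute[of "cnj _"]])
  finally have "(norm z)^2 = (norm w)^2 + ((cmod p)^2 + (cmod q)^2)"
    by (simp add: norm_sq_cinner)
  then show ?thesis by (simp add: p_def q_def)
qed

lemma opnorm_ge:
  fixes A :: "complex^'n^'n"
  shows "norm (A *v z) \<le> opnorm A * norm z"
  unfolding opnorm_def by (rule onorm) simp

lemma opnorm_le:
  fixes A :: "complex^'n^'n"
  assumes "\<And>z. norm (A *v z) \<le> b * norm z"
  shows "opnorm A \<le> b"
  unfolding opnorm_def by (rule onorm_le) (rule assms)

lemma opnorm_nonneg: "opnorm (A :: complex^'n^'n) \<ge> 0"
  unfolding opnorm_def by (rule onorm_pos_le) simp

lemma exists_orth:
  fixes W :: "(complex^'n) set"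
  assumes "finite W" "card W < CARD('n)"
  shows "\<exists>z. norm z = 1 \<and> (\<forall>w\<in>W. cinner w z = 0)"
proof -
  define W' where "W' = W \<union> (\<lambda>w. \<i> *s w) ` W"
  have "dim W' \<le> card W'"
    using assms(1) by (simp add: W'_def dim_le_card')
  also have "card W' \<le> card W + card W"
    unfolding W'_def using assms(1) by (meson card_Un_le card_image_le le_trans add_left_mono)
  also have "\<dots> < DIM(complex^'n)" using assms(2) by simp
  finally obtain z where z: "z \<noteq> 0" "\<And>y. y \<in> span W' \<Longrightarrow> orthogonal z y"
    using orthogonal_to_subspace_exists by blast
  have "cinner w z = 0" if "w \<in> W" for w
  proof -
    have "orthogonal z w" "orthogonal z (\<i> *s w)"
      using that by (auto intro!: z(2) span_base simp: W'_def)
    then have "inner w z = 0" "inner (\<i> *s w) z = 0"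
      by (simp_all add: orthogonal_def inner_commute)
    then have "Re (cinner w z) = 0" "Im (cinner w z) = 0"
      by (simp only: inner_eq_Re_cinner[symmetric], simp only: inner_ii_eq_Im_cinner[symmetric])
    then show ?thesis by (simp add: complex_eq_iff)
  qed
  then show ?thesis
  proof (intro exI[of _ "(1 / norm z) *\<^sub>R z"] conjI ballI)
    show "norm ((1 / norm z) *\<^sub>R z) = 1" using z(1) by simp
    fix w assume "w \<in> W"
    then show "cinner w ((1 / norm z) *\<^sub>R z) = 0"
      using \<open>\<And>w. w \<in> W \<Longrightarrow> cinner w z = 0\<close>
      by (simp add: ofreal_scale[symmetric] cinner_scale_right)
  qed
qed


lemma cmod_ident:
  fixes p q :: complex and s :: real
  shows "(cmod (of_real s * q - p))^2 + (cmod (of_real s * p + q))^2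
        = (1 + s^2) * ((cmod p)^2 + (cmod q)^2)"
  by (simp only: cmod_power2) (simp add: power2_eq_square algebra_simps)

lemma core:
  fixes x y g h :: "complex^'n" and r s :: real
  assumes nx: "norm x = 1" and ny: "norm y = 1" and ng: "norm g = 1" and nh: "norm h = 1"
    and xg: "cinner x g = 0" and yh: "cinner y h = 0" and r: "r > 0" and s: "s > 0"
  shows "bj_orth (outer (complex_of_real r *s x) y)
           (outer (complex_of_real s *s x) h + outer (complex_of_real s *s g) y + outer g h)
       \<and> \<not> bj_orth (outer (complex_of_real s *s x) h + outer (complex_of_real s *s g) y + outer g h)
           (outer (complex_of_real r *s x) y)"
proof -
  define A where "A = outer (complex_of_real r *s x) y"
  define B where "B = outer (complex_of_real s *s x) h + outer (complex_of_real s *s g) y + outer g h"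
  have hy: "cinner h y = 0" using yh by (simp add: cinner_commute[of h y])
  have yy: "cinner y y = 1" "cinner h h = 1" using ny nh by (simp_all add: cinner_self)
  have Az: "A *v z = (complex_of_real r * cinner y z) *s x" for z
    by (simp add: A_def outer_mult vec_eq_iff)
  have Bz: "B *v z = (complex_of_real s * cinner h z) *s x
                 + (complex_of_real s * cinner y z + cinner h z) *s g" for z
    by (simp add: B_def outer_mult matrix_vector_mult_add_rdistrib vec_eq_iff algebra_simps)
  have bes: "(cmod (cinner y z))^2 \<le> (norm z)^2" for z
    using bessel2[OF ny nh yh, of z] zero_le_power2[of "cmod (cinner h z)"] by linarith
  have opA: "opnorm A \<le> r"
  proof (rule opnorm_le)
    fix z
    have "norm (A *v z) = r * cmod (cinner y z)"
      using pyth2[OF nx ng xg, of "complex_of_real r * cinner y z" 0] r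
      by (simp add: Az norm_mult)
    also have "\<dots> \<le> r * norm z"
      using bes[of z] r by (simp add: power2_le_iff_abs_le mult_left_mono)
    finally show "norm (A *v z) \<le> r * norm z" .
  qed
  have orth1: "bj_orth A B"
    unfolding bj_orth_def
  proof
    fix c :: complex
    have "(A + cmat_scale c B) *v y = complex_of_real r *s x + (c * complex_of_real s) *s g"
      using yy hy by (simp add: matrix_vector_mult_add_rdistrib cmat_scale_mult Az Bz vec_eq_iff)
    then have "(norm ((A + cmat_scale c B) *v y))^2 = r^2 + (cmod (c * complex_of_real s))^2"
      using pyth2[OF nx ng xg] r by simp
    then have "r \<le> norm ((A + cmat_scale c B) *v y)"
      using r by (metis le_add_same_cancel1 norm_ge_zero power2_le_iff_abs_le zero_le_power2 abs_of_nonneg less_imp_le)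
    also have "\<dots> \<le> opnorm (A + cmat_scale c B)"
      using opnorm_ge[of "A + cmat_scale c B" y] ny by simp
    finally show "opnorm A \<le> opnorm (A + cmat_scale c B)" using opA by simp
  qed
  define K where "K = sqrt (1 + s^2)"
  have K: "K > 0" "K^2 = 1 + s^2" by (simp_all add: K_def add_pos_nonneg)
  have opBA: "opnorm (B + cmat_scale (complex_of_real (- 1 / r)) A) \<le> K"
  proof (rule opnorm_le)
    fix z
    define p where "p = cinner y z"
    define q where "q = cinner h z"
    have "(B + cmat_scale (complex_of_real (- 1 / r)) A) *v z
        = (complex_of_real s * q - p) *s x + (complex_of_real s * p + q) *s g"
      using r by (simp add: matrix_vector_mult_add_rdistrib cmat_scale_mult Az Bz vec_eq_iff p_def q_def algebra_simps)
    then have "(norm ((B + cmat_scale (complex_of_real (- 1 / r)) A) *v z))^2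
        = (1 + s^2) * ((cmod p)^2 + (cmod q)^2)"
      by (simp only: pyth2[OF nx ng xg] cmod_ident)
    also have "\<dots> \<le> (1 + s^2) * (norm z)^2"
      using bessel2[OF ny nh yh, of z] unfolding p_def q_def
      by (intro mult_left_mono) (simp_all add: add_nonneg_nonneg)
    also have "\<dots> = (K * norm z)^2" using K by (simp add: power_mult_distrib)
    finally show "norm ((B + cmat_scale (complex_of_real (- 1 / r)) A) *v z) \<le> K * norm z"
      using K by (simp add: power2_le_iff_abs_le)
  qed
  have opB: "opnorm B > K"
  proof -
    define w where "w = complex_of_real s *s y + 1 *s h"
    have Bw: "B *v w = complex_of_real s *s x + (complex_of_real s * complex_of_real s + 1) *s g"
      using yy hy yh by (simp add: Bz w_def cinner_simps)
    have nw: "(norm w)^2 = s^2 + 1" by (simp only: w_def pyth2[OF ny nh yh]) (simp add: abs_of_pos s)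
    have nBw: "(norm (B *v w))^2 = s^2 + (s^2 + 1)^2"
    proof -
      have "complex_of_real s * complex_of_real s + 1 = complex_of_real (s^2 + 1)"
        by (simp add: power2_eq_square)
      then show ?thesis using pyth2[OF nx ng xg] Bw s by (simp del: of_real_add)
    qed
    have "norm (B *v w) \<le> opnorm B * norm w" by (rule opnorm_ge)
    then have "(norm (B *v w))^2 \<le> (opnorm B)^2 * (norm w)^2"
      by (metis norm_ge_zero power_mono power_mult_distrib)
    then have "s^2 + (s^2 + 1)^2 \<le> (opnorm B)^2 * (s^2 + 1)" using nw nBw by simp
    then have "(s^2 + 1) * (s^2 + 1) < (opnorm B)^2 * (s^2 + 1)"
      using s by (simp add: power2_eq_square) (smt (verit) mult_pos_pos)
    then have "K^2 < (opnorm B)^2" using K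
      by (smt (verit) mult_right_less_imp_less zero_le_power2)
    then show ?thesis using opnorm_nonneg[of B] K
      by (meson power_less_imp_less_base)
  qed
  have "\<not> bj_orth B A"
    unfolding bj_orth_def using opBA opB by (meson leD order.strict_trans2 not_less)
  then show ?thesis using orth1 by (simp add: A_def B_def)
qed


lemma norm_cscale: "norm (c *s (w::complex^'n)) = cmod c * norm w"
proof -
  have "complex_of_real ((norm (c *s w))^2) = cinner (c *s w) (c *s w)"
    by (simp only: cinner_self)
  also have "\<dots> = (cnj c * c) * cinner w w" by (simp add: cinner_simps)
  also have "\<dots> = complex_of_real ((cmod c * norm w)^2)"
    by (simp only: cnj_mult_self cinner_self of_real_mult[symmetric] power_mult_distrib)
  finally have "(norm (c *s w))^2 = (cmod c * norm w)^2" using of_real_eq_iff by blast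
  then show ?thesis by (simp add: power2_eq_iff_nonneg)
qed

lemma rank1_outer:
  fixes A :: "complex^'n^'n"
  assumes "rank A = 1"
  shows "\<exists>p q. p \<noteq> 0 \<and> q \<noteq> 0 \<and> A = outer p q"
proof -
  obtain Bs where Bs: "Bs \<subseteq> rows A" "vec.independent Bs" "rows A \<subseteq> vec.span Bs" "card Bs = 1"
    using vec.basis_exists[of "rows A"] assms by (metis row_rank_def_gen)
  then obtain b where b: "Bs = {b}" by (meson card_1_singletonE)
  have b0: "b \<noteq> 0" using Bs(2) b vec.dependent_zero by blast
  have "\<forall>i. \<exists>c. A $ i = c *s b"
  proof
    fix i
    have "A $ i \<in> rows A" by (auto simp: rows_def row_def)
    then have "A $ i \<in> vec.span {b}" using Bs(3) b by auto
    then show "\<exists>c. A $ i = c *s b" by (auto simp: vec.span_singleton)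
  qed
  then obtain c where c: "\<And>i. A $ i = c i *s b" by metis
  define p where "p = (\<chi> i. c i)"
  define q where "q = (\<chi> j. cnj (b $ j))"
  have Aeq: "A = outer p q" by (simp add: outer_def p_def q_def vec_eq_iff c)
  have "q \<noteq> 0" using b0 by (simp add: q_def vec_eq_iff)
  moreover have "p \<noteq> 0"
  proof
    assume "p = 0"
    then have "A = 0" by (simp add: Aeq outer_def vec_eq_iff)
    then have "rows A \<subseteq> vec.span {}" by (auto simp: rows_def row_def vec.span_zero zero_vec_def)
    then have "vec.dim (rows A) \<le> card ({} :: (complex^'n) set)"
      by (rule vec.dim_le_card) simp
    then show False using assms unfolding row_rank_def_gen by simp
  qed
  ultimately show ?thesis using Aeq by blast
qed

lemma exists_nonpar:
  fixes v :: "nat \<Rightarrow> complex^'n"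
  assumes "vec.dim (v ` {..<k}) \<ge> 2"
  shows "\<exists>j<k. v j - cinner x (v j) *s x \<noteq> 0"
proof (rule ccontr)
  assume "\<not> ?thesis"
  then have "v ` {..<k} \<subseteq> vec.span {x}"
    by (auto simp: vec.span_singleton)
  then have "vec.dim (v ` {..<k}) \<le> card {x}" by (intro vec.dim_le_card) auto
  then show False using assms by simp
qed

lemma k_ge2:
  fixes v :: "nat \<Rightarrow> complex^'n"
  assumes "vec.dim (v ` {..<k}) \<ge> 2"
  shows "k \<ge> 2"
proof -
  have "vec.dim (v ` {..<k}) \<le> card (v ` {..<k})"
    by (intro vec.dim_le_card) (auto intro: vec.span_base)
  also have "\<dots> \<le> k" using card_image_le[of "{..<k}" v] by simp
  finally show ?thesis using assms by simp
qed

lemma sesqB: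
  "sesq v (outer (complex_of_real s *s x) h + outer (complex_of_real s *s g) y + outer g h) u
   = complex_of_real s * cinner v x * cinner h u + complex_of_real s * cinner v g * cinner y u
     + cinner v g * cinner h u"
  by (simp add: sesq_cinner outer_mult matrix_vector_mult_add_rdistrib cinner_simps algebra_simps)


lemma card_ins_img: "finite T \<Longrightarrow> card (insert a (f ` T)) \<le> Suc (card T)"
proof -
  assume "finite T"
  then have "card (insert a (f ` T)) \<le> Suc (card (f ` T))" by (simp add: card_insert_if)
  also have "\<dots> \<le> Suc (card T)" using card_image_le[OF \<open>finite T\<close>, of f] by simp
  finally show ?thesis .
qed

lemma cinner_commute0: "cinner a b = 0 \<Longrightarrow> cinner b a = 0"
  by (simp add: cinner_commute[of b a])

lemma construct:
  fixes v u :: "nat \<Rightarrow> complex^'n" and x y :: "complex^'n"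
  assumes nx: "norm x = 1" and ny: "norm y = 1" and kn: "k < CARD('n)" and k2: "k \<ge> 2"
    and ab: "\<And>i. i < k \<Longrightarrow> cinner (v i) x * cinner y (u i) = 0"
    and dv: "vec.dim (v ` {..<k}) \<ge> 2" and du: "vec.dim (u ` {..<k}) \<ge> 2"
  shows "\<exists>g h s. norm g = 1 \<and> norm h = 1 \<and> cinner x g = 0 \<and> cinner y h = 0 \<and> s > 0 \<and>
     (\<forall>i<k. sesq (v i) (outer (complex_of_real s *s x) h + outer (complex_of_real s *s g) y + outer g h) (u i) = 0)"
proof -
  have xx: "cinner x x = 1" "cinner y y = 1" using nx ny by (simp_all add: cinner_self)
  consider (A) "\<forall>i<k. cinner (v i) x \<noteq> 0" | (B) "\<forall>i<k. cinner y (u i) \<noteq> 0"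
    | (C) i1 i2 where "i1 < k" "cinner (v i1) x = 0" "i2 < k" "cinner y (u i2) = 0" by blast
  then show ?thesis
  proof cases
    case C
    define Sa where "Sa = {i. i < k \<and> cinner (v i) x \<noteq> 0}"
    define T where "T = (if Sa = {} then {i2} else Sa)"
    have Tsub: "T \<subseteq> {..<k}" using C by (auto simp: T_def Sa_def)
    have Tfin: "finite T" using Tsub finite_subset by blast
    have Tne: "T \<noteq> {}" by (simp add: T_def)
    have cT1: "card T \<ge> 1" using Tfin Tne by (simp add: Suc_le_eq card_gt_0_iff)
    have cT: "card T \<le> k - 1"
    proof (cases "Sa = {}")
      case True then show ?thesis using k2 by (simp add: T_def)
    next
      case False
      then have "T \<subseteq> {..<k} - {i1}" using C by (auto simp: T_def Sa_def)
      then have "card T \<le> card ({..<k} - {i1})" by (intro card_mono) auto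
      then show ?thesis using C by simp
    qed
    have cT': "card ({..<k} - T) \<le> k - 1"
      using card_Diff_subset[OF Tfin Tsub] cT1 by simp
    obtain h where h: "norm h = 1" "\<And>w. w \<in> insert y (u ` T) \<Longrightarrow> cinner w h = 0"
    proof -
      have "card (insert y (u ` T)) < CARD('n)" using card_ins_img[OF Tfin, of y u] cT kn k2 by linarith
      then obtain z where "norm z = 1" "\<forall>w\<in>insert y (u ` T). cinner w z = 0" using exists_orth[of "insert y (u ` T)"] Tfin by auto
      then show ?thesis using that by blast
    qed
    have fT': "finite ({..<k} - T)" by simp
    obtain g where g: "norm g = 1" "\<And>w. w \<in> insert x (v ` ({..<k} - T)) \<Longrightarrow> cinner w g = 0"
    proof -
      have "card (insert x (v ` ({..<k} - T))) < CARD('n)" using card_ins_img[OF fT', of x v] cT' kn k2 by linarith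
      then obtain z where "norm z = 1" "\<forall>w\<in>insert x (v ` ({..<k} - T)). cinner w z = 0" using exists_orth[of "insert x (v ` ({..<k} - T))"] fT' by auto
      then show ?thesis using that by blast
    qed
    show ?thesis
    proof (rule exI[of _ g], rule exI[of _ h], rule exI[of _ 1], intro conjI allI impI)
      show "norm g = 1" by (fact g(1))
      show "norm h = 1" by (fact h(1))
      show "cinner x g = 0" using g(2) by simp
      show "cinner y h = 0" using h(2) by simp
      show "(0::real) < 1" by simp
      fix i assume ik: "i < k"
      show "sesq (v i) (outer (complex_of_real 1 *s x) h + outer (complex_of_real 1 *s g) y + outer g h) (u i) = 0"
      proof (cases "i \<in> T")
        case True
        then have a: "cinner h (u i) = 0" using cinner_commute0[OF h(2)[of "u i"]] by auto
        have "cinner y (u i) = 0"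
        proof (cases "Sa = {}")
          case True then show ?thesis using \<open>i \<in> T\<close> C by (simp add: T_def)
        next
          case False
          then have "T = Sa" by (simp add: T_def)
          then have "i < k" "cinner (v i) x \<noteq> 0" using \<open>i \<in> T\<close> by (auto simp: Sa_def)
          then show ?thesis using ab[of i] by simp
        qed
        then show ?thesis by (simp only: sesqB a) simp
      next
        case False
        then have b: "cinner (v i) g = 0" using g(2) ik by auto
        have "cinner (v i) x = 0"
        proof (cases "Sa = {}")
          case True then show ?thesis using ik by (auto simp: Sa_def)
        next
          case F: False
          then have "T = Sa" by (simp add: T_def)
          then show ?thesis using False ik by (auto simp: Sa_def)
        qed
        then show ?thesis by (simp only: sesqB b) simp
      qed
    qed
  next
    case A
    obtain j where j: "j < k" "v j - cinner x (v j) *s x \<noteq> 0" using exists_nonpar[OF dv] by blast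
    define w where "w = v j - cinner x (v j) *s x"
    define nw where "nw = norm w"
    have nw: "nw > 0" using j(2) by (simp add: nw_def w_def)
    define aj where "aj = cinner (v j) x"
    have aj: "aj \<noteq> 0" "cmod aj > 0" using A j(1) by (simp_all add: aj_def)
    define lam where "lam = - (aj / complex_of_real (cmod aj))"
    have lam: "cmod lam = 1" using aj by (simp add: lam_def norm_divide)
    define g where "g = (complex_of_real (1 / nw) * lam) *s w"
    define s where "s = nw / cmod aj"
    have xw: "cinner x w = 0" using xx by (simp add: w_def cinner_simps)
    have vjw: "cinner (v j) w = complex_of_real (nw^2)"
    proof -
      have "v j = w + cinner x (v j) *s x" by (simp add: w_def)
      then have "cinner (v j) w = cinner (w + cinner x (v j) *s x) w" by simp
      also have "\<dots> = cinner w w" using xw by (simp add: cinner_simps)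
      finally show ?thesis by (simp add: cinner_self nw_def)
    qed
    have bj: "cinner (v j) g = lam * complex_of_real nw"
      using nw by (simp add: g_def cinner_scale_right vjw power2_eq_square)
    obtain h where h: "norm h = 1" "\<And>z. z \<in> insert y (u ` ({..<k} - {j})) \<Longrightarrow> cinner z h = 0"
    proof -
      have "card ({..<k} - {j}) = k - 1" using j(1) by simp
      then have "card (insert y (u ` ({..<k} - {j}))) < CARD('n)"
        using card_ins_img[of "{..<k} - {j}" y u] kn k2 by simp
      then obtain z where "norm z = 1" "\<forall>w\<in>insert y (u ` ({..<k} - {j})). cinner w z = 0" using exists_orth[of "insert y (u ` ({..<k} - {j}))"] by auto
      then show ?thesis using that by blast
    qed
    show ?thesis
    proof (rule exI[of _ g], rule exI[of _ h], rule exI[of _ s], intro conjI allI impI)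
      show "norm g = 1" using nw lam by (simp add: g_def norm_cscale norm_mult norm_divide nw_def[symmetric])
      show "norm h = 1" by (fact h(1))
      show "cinner x g = 0" using xw by (simp add: g_def cinner_scale_right)
      show "cinner y h = 0" using h(2) by simp
      show "s > 0" using nw aj by (simp add: s_def)
      fix i assume ik: "i < k"
      have bi: "cinner y (u i) = 0" using ab[OF ik] A ik by simp
      show "sesq (v i) (outer (complex_of_real s *s x) h + outer (complex_of_real s *s g) y + outer g h) (u i) = 0"
      proof (cases "i = j")
        case False
        then have a: "cinner h (u i) = 0" using cinner_commute0[OF h(2)[of "u i"]] ik by auto
        show ?thesis by (simp only: sesqB a bi) simp
      next
        case True
        have "complex_of_real s * aj + lam * complex_of_real nw = 0"
          using aj by (simp add: s_def lam_def field_simps)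
        then have "(complex_of_real s * aj + lam * complex_of_real nw) * cinner h (u j) = 0"
          by simp
        then have "complex_of_real s * aj * cinner h (u j) + lam * complex_of_real nw * cinner h (u j) = 0"
          by (simp only: distrib_right)
        moreover have bj0: "cinner y (u j) = 0" using bi True by simp
        ultimately show ?thesis using True by (simp only: sesqB bj0 bj aj_def[symmetric]) simp
      qed
    qed
  next
    case B
    obtain j where j: "j < k" "u j - cinner y (u j) *s y \<noteq> 0" using exists_nonpar[OF du] by blast
    define w where "w = u j - cinner y (u j) *s y"
    define nw where "nw = norm w"
    have nw: "nw > 0" using j(2) by (simp add: nw_def w_def)
    define bt where "bt = cinner y (u j)"
    have bt: "bt \<noteq> 0" "cmod bt > 0" using B j(1) by (simp_all add: bt_def)
    define mu where "mu = - (cnj bt / complex_of_real (cmod bt))"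
    have mu: "cmod mu = 1" using bt by (simp add: mu_def norm_divide)
    define h where "h = (complex_of_real (1 / nw) * mu) *s w"
    define s where "s = nw / cmod bt"
    have yw: "cinner y w = 0" using xx by (simp add: w_def cinner_simps)
    have wuj: "cinner w (u j) = complex_of_real (nw^2)"
    proof -
      have "u j = w + cinner y (u j) *s y" by (simp add: w_def)
      then have "cinner w (u j) = cinner w (w + cinner y (u j) *s y)" by simp
      also have "\<dots> = cinner w w" using yw cinner_commute0[OF yw] by (simp add: cinner_simps)
      finally show ?thesis by (simp add: cinner_self nw_def)
    qed
    have aj: "cinner h (u j) = cnj mu * complex_of_real nw"
      using nw by (simp add: h_def cinner_scale_left wuj power2_eq_square)
    obtain g where g: "norm g = 1" "\<And>z. z \<in> insert x (v ` ({..<k} - {j})) \<Longrightarrow> cinner z g = 0"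
    proof -
      have "card ({..<k} - {j}) = k - 1" using j(1) by simp
      then have "card (insert x (v ` ({..<k} - {j}))) < CARD('n)"
        using card_ins_img[of "{..<k} - {j}" x v] kn k2 by simp
      then obtain z where "norm z = 1" "\<forall>w\<in>insert x (v ` ({..<k} - {j})). cinner w z = 0" using exists_orth[of "insert x (v ` ({..<k} - {j}))"] by auto
      then show ?thesis using that by blast
    qed
    show ?thesis
    proof (rule exI[of _ g], rule exI[of _ h], rule exI[of _ s], intro conjI allI impI)
      show "norm h = 1" using nw mu by (simp add: h_def norm_cscale norm_mult norm_divide nw_def[symmetric])
      show "norm g = 1" by (fact g(1))
      show "cinner y h = 0" using yw by (simp add: h_def cinner_scale_right)
      show "cinner x g = 0" using g(2) by simp
      show "s > 0" using nw bt by (simp add: s_def)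
      fix i assume ik: "i < k"
      have ai: "cinner (v i) x = 0" using ab[OF ik] B ik by simp
      show "sesq (v i) (outer (complex_of_real s *s x) h + outer (complex_of_real s *s g) y + outer g h) (u i) = 0"
      proof (cases "i = j")
        case False
        then have b: "cinner (v i) g = 0" using g(2) ik by auto
        show ?thesis by (simp only: sesqB b ai) simp
      next
        case True
        have "complex_of_real s * bt + cnj mu * complex_of_real nw = 0"
          using bt by (simp add: s_def mu_def field_simps)
        then have "cinner (v j) g * (complex_of_real s * bt + cnj mu * complex_of_real nw) = 0"
          by simp
        then have "complex_of_real s * cinner (v j) g * bt + cinner (v j) g * (cnj mu * complex_of_real nw) = 0"
          by (simp only: distrib_left mult.assoc mult.left_commute[of "complex_of_real s"])
        moreover have aj0: "cinner (v j) x = 0" using ai True by simp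
        ultimately show ?thesis using True by (simp only: sesqB aj0 aj bt_def[symmetric]) simp
      qed
    qed
  qed
qed


theorem lemma3p4:
  fixes v u :: "nat \<Rightarrow> complex^'n" and k :: nat
  assumes "CARD('n) \<ge> 2"
    and "k \<le> CARD('n) - 1"
    and "\<And>i. i < k \<Longrightarrow> norm (v i) = 1"
    and "\<And>i. i < k \<Longrightarrow> norm (u i) = 1"
    and "vec.dim (v ` {..<k}) \<ge> 2"
    and "vec.dim (u ` {..<k}) \<ge> 2"
  shows "\<not> (\<exists>A \<in> {X :: complex^'n^'n. \<forall>i<k. sesq (v i) X (u i) = 0}.
            rank A = 1 \<and> left_symmetric_in A {X. \<forall>i<k. sesq (v i) X (u i) = 0})"
proof
  assume "\<exists>A \<in> {X :: complex^'n^'n. \<forall>i<k. sesq (v i) X (u i) = 0}.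
            rank A = 1 \<and> left_symmetric_in A {X. \<forall>i<k. sesq (v i) X (u i) = 0}"
  then obtain A :: "complex^'n^'n" where AV: "\<forall>i<k. sesq (v i) A (u i) = 0" and rA: "rank A = 1"
    and ls: "left_symmetric_in A {X. \<forall>i<k. sesq (v i) X (u i) = 0}" by blast
  obtain p q where pq: "p \<noteq> 0" "q \<noteq> 0" "A = outer p q" using rank1_outer[OF rA] by blast
  define x where "x = (1 / norm p) *\<^sub>R p"
  define y where "y = (1 / norm q) *\<^sub>R q"
  define r where "r = norm p * norm q"
  have nx: "norm x = 1" "norm y = 1" using pq by (simp_all add: x_def y_def)
  have r: "r > 0" using pq by (simp add: r_def)
  have Aeq: "A = outer (complex_of_real r *s x) y"
  proof -
    have "norm p \<noteq> 0" "norm q \<noteq> 0" using pq by auto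
    then show ?thesis using pq(3)
      by (simp add: outer_def x_def y_def r_def vec_eq_iff) (simp add: scaleR_conv_of_real field_simps)
  qed
  have k2: "k \<ge> 2" using k_ge2[OF assms(5)] .
  have kn: "k < CARD('n)" using assms(2) k2 by linarith
  have ab: "cinner (v i) x * cinner y (u i) = 0" if "i < k" for i
  proof -
    have "sesq (v i) A (u i) = complex_of_real r * (cinner (v i) x * cinner y (u i))"
      by (simp add: Aeq sesq_cinner outer_mult cinner_simps)
    then show ?thesis using AV that r by simp
  qed
  obtain g h s where ghs: "norm g = 1" "norm h = 1" "cinner x g = 0" "cinner y h = 0" "s > 0"
    "\<forall>i<k. sesq (v i) (outer (complex_of_real s *s x) h + outer (complex_of_real s *s g) y + outer g h) (u i) = 0"
    using construct[OF nx kn k2 ab assms(5,6)] by blast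
  define B where "B = outer (complex_of_real s *s x) h + outer (complex_of_real s *s g) y + outer g h"
  have BV: "B \<in> {X. \<forall>i<k. sesq (v i) X (u i) = 0}" using ghs(6) by (simp add: B_def)
  have "bj_orth A B \<and> \<not> bj_orth B A"
    unfolding Aeq B_def by (rule core[OF nx ghs(1,2,3,4) r ghs(5)])
  then show False using ls BV unfolding left_symmetric_in_def by blast
qed

end
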